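(* Let $n>s\ge1$ be integers. If $F_{s,k}(n)\neq 0$ for every $k\in\{1,2,\dots,n\}$, then for any two $n$-multisets $A,B$ of complex numbers, $A^{(s)}=B^{(s)}$ implies $A=B$.
   Context: An $n$-multiset is a multiset $A=\{a_1,\dots,a_n\}$ of $n$ numbers, counted with multiplicity. For $1\le s\le n$, $A^{(s)}$ denotes the multiset of the $\binom{n}{s}$ numbers $a_{i_1}+\dots+a_{i_s}$ over all $1\le i_1<\dots<i_s\le n$. For an integer $j\ge0$, $\binom{x}{j}=x(x-1)\cdots(x-j+1)/j!$ as a polynomial in $x$, and $\binom{x}{j}=0$ for $j<0$. For integers $s\ge1$, $k\ge1$, the Moser polynomial is $F_{s,k}(x)=\sum_{p=1}^{s}(-1)^{p-1}p^{k-1}\binom{x}{s-p}$; for integers $s<1$ set $F_{s,k}\equiv0$. *)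

theory Defs
  imports Complex_Main "HOL-Library.Multiset"
begin

definition subset_sums :: "nat \<Rightarrow> complex list \<Rightarrow> complex multiset" where
  "subset_sums s xs =
     image_mset (\<lambda>I. \<Sum>i\<in>I. xs ! i)
       (mset_set {I. I \<subseteq> {0..<length xs} \<and> card I = s})"

definition moser :: "int \<Rightarrow> nat \<Rightarrow> real \<Rightarrow> real" where
  "moser s k x = (if s < 1 then 0 else
     (\<Sum>p = 1..nat s. (-1) ^ (p - 1) * real p ^ (k - 1) * (x gchoose (nat s - p))))"

end

theory Submission
  imports Defs "HOL-Computational_Algebra.Polynomial"
begin


definition SS :: "nat \<Rightarrow> nat \<Rightarrow> nat set set" where
  "SS n s = {I. I \<subseteq> {..<n} \<and> card I = s}"

definition sig :: "(nat \<Rightarrow> complex) \<Rightarrow> nat set \<Rightarrow> complex" where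
  "sig a I = (\<Sum>i\<in>I. a i)"

definition TT :: "(nat \<Rightarrow> complex) \<Rightarrow> nat \<Rightarrow> nat \<Rightarrow> nat \<Rightarrow> complex" where
  "TT a n s k = (\<Sum>I\<in>SS n s. sig a I ^ k)"

definition PP :: "(nat \<Rightarrow> complex) \<Rightarrow> nat \<Rightarrow> nat \<Rightarrow> complex" where
  "PP a n k = (\<Sum>j<n. a j ^ k)"

definition WW :: "(nat \<Rightarrow> complex) \<Rightarrow> nat \<Rightarrow> nat \<Rightarrow> nat \<Rightarrow> nat \<Rightarrow> complex" where
  "WW a n s p k = (\<Sum>I\<in>SS n s. \<Sum>j\<in>I. (sig a I + of_nat p * a j) ^ k)"

definition RR :: "(nat \<Rightarrow> complex) \<Rightarrow> nat \<Rightarrow> nat \<Rightarrow> nat \<Rightarrow> nat \<Rightarrow> complex" where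
  "RR a n s p k = (\<Sum>I\<in>SS n s. \<Sum>j<n. (sig a I + of_nat p * a j) ^ k)"

lemma finite_SS[simp]: "finite (SS n s)"
  unfolding SS_def by (rule finite_subset[of _ "Pow {..<n}"]) auto

lemma SS_fin: "I \<in> SS n s \<Longrightarrow> finite I"
  unfolding SS_def by (auto intro: finite_subset)

lemma card_SS: "card (SS n s) = n choose s"
  unfolding SS_def using n_subsets[of "{..<n}" s] by simp

lemma SS_0: "SS n 0 = {{}}"
  unfolding SS_def by (auto simp: card_eq_0_iff dest: finite_subset[OF _ finite_lessThan])

lemma WW_0p: "WW a n 0 p k = 0"
  by (simp add: WW_def SS_0)

lemma WW_s0: "WW a n s 0 k = of_nat s * TT a n s k"
  unfolding WW_def TT_def by (simp add: SS_def sum_distrib_left)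

lemma WW_step: "WW a n (Suc s) p k = RR a n s (Suc p) k - WW a n s (Suc p) k"
proof -
  let ?h = "\<lambda>J j. (sig a J + of_nat (Suc p) * a j) ^ k"
  have "RR a n s (Suc p) k - WW a n s (Suc p) k = (\<Sum>J\<in>SS n s. \<Sum>j\<in>{..<n} - J. ?h J j)"
    unfolding RR_def WW_def sum_subtractf[symmetric]
  proof (rule sum.cong[OF refl])
    fix J assume J: "J \<in> SS n s"
    hence "J \<subseteq> {..<n}" by (simp add: SS_def)
    then show "(\<Sum>j<n. ?h J j) - (\<Sum>j\<in>J. ?h J j) = (\<Sum>j\<in>{..<n} - J. ?h J j)"
      using sum.subset_diff[of J "{..<n}" "?h J"] by simp
  qed
  also have "\<dots> = (\<Sum>(J,j)\<in>Sigma (SS n s) (\<lambda>J. {..<n} - J). ?h J j)"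
    by (rule sum.Sigma) auto
  also have "\<dots> = (\<Sum>(I,j)\<in>Sigma (SS n (Suc s)) (\<lambda>I. I). (sig a I + of_nat p * a j) ^ k)"
  proof (rule sum.reindex_bij_witness[where i="\<lambda>(I,j). (I - {j}, j)" and j="\<lambda>(J,j). (insert j J, j)"])
    fix y assume "y \<in> Sigma (SS n s) (\<lambda>J. {..<n} - J)"
    then obtain J j where y: "y = (J,j)" "J \<in> SS n s" "j \<in> {..<n} - J" by auto
    have fJ: "finite J" using y SS_fin by blast
    show "(case (case y of (J, j) \<Rightarrow> (insert j J, j)) of (I, j) \<Rightarrow> (I - {j}, j)) = y"
      using y by auto
    show "(case y of (J, j) \<Rightarrow> (insert j J, j)) \<in> Sigma (SS n (Suc s)) (\<lambda>I. I)"
      using y fJ by (auto simp: SS_def)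
    have "sig a (insert j J) = sig a J + a j" unfolding sig_def
      using fJ y by simp
    then show "(case (case y of (J, j) \<Rightarrow> (insert j J, j)) of (I, j) \<Rightarrow> (sig a I + of_nat p * a j) ^ k) =
         (case y of (J, j) \<Rightarrow> ?h J j)"
      using y by (simp add: algebra_simps)
  next
    fix x assume "x \<in> Sigma (SS n (Suc s)) (\<lambda>I. I)"
    then obtain I j where x: "x = (I,j)" "I \<in> SS n (Suc s)" "j \<in> I" by auto
    have fI: "finite I" using x SS_fin by blast
    show "(case (case x of (I, j) \<Rightarrow> (I - {j}, j)) of (J, j) \<Rightarrow> (insert j J, j)) = x"
      using x by auto
    show "(case x of (I, j) \<Rightarrow> (I - {j}, j)) \<in> Sigma (SS n s) (\<lambda>J. {..<n} - J)"
      using x fI by (auto simp: SS_def)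
  qed
  also have "\<dots> = WW a n (Suc s) p k"
    unfolding WW_def by (rule sum.Sigma[symmetric]) (auto dest: SS_fin)
  finally show ?thesis by simp
qed


lemma neg_pow: "1 \<le> q \<Longrightarrow> (-1::complex)^q = - ((-1)^(q-1))"  by (cases q) auto

lemma WW_unfold: "WW a n s p k = (\<Sum>q=1..s. (-1)^(q-1) * RR a n (s-q) (p+q) k)"
proof (induction s arbitrary: p)
  case 0 then show ?case by (simp add: WW_0p)
next
  case (Suc s)
  have "(\<Sum>q=1..Suc s. (-1)^(q-1) * RR a n (Suc s-q) (p+q) k)
      = RR a n s (Suc p) k + (\<Sum>q=Suc 1..Suc s. (-1)^(q-1) * RR a n (Suc s-q) (p+q) k)"
    by (subst sum.atLeast_Suc_atMost) auto
  also have "(\<Sum>q=Suc 1..Suc s. (-1)^(q-1) * RR a n (Suc s-q) (p+q) k)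
      = (\<Sum>q=1..s. (-1)^q * RR a n (s-q) (Suc p+q) k)"
    by (subst sum.shift_bounds_cl_Suc_ivl) simp
  also have "\<dots> = - (\<Sum>q=1..s. (-1)^(q-1) * RR a n (s-q) (Suc p+q) k)"
    unfolding sum_negf[symmetric] by (rule sum.cong[OF refl]) (simp add: neg_pow)
  finally show ?case using Suc[of "Suc p"] by (simp add: WW_step)
qed

lemma PP_0: "PP a n 0 = of_nat n" by (simp add: PP_def)

lemma TT_0: "TT a n s 0 = of_nat (n choose s)"
  by (simp add: TT_def card_SS)

lemma TT_s0: "k \<ge> 1 \<Longrightarrow> TT a n 0 k = 0"
  by (simp add: TT_def SS_0 sig_def)

lemma RR_expand: "RR a n s p k = (\<Sum>m\<le>k. of_nat (k choose m) * of_nat p ^ (k-m) * TT a n s m * PP a n (k-m))"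
proof -
  have "RR a n s p k = (\<Sum>I\<in>SS n s. \<Sum>j<n. \<Sum>m\<le>k. of_nat (k choose m) * of_nat p ^ (k-m) * (sig a I ^ m * a j ^ (k-m)))"
    unfolding RR_def binomial_ring by (simp add: power_mult_distrib algebra_simps)
  also have "\<dots> = (\<Sum>I\<in>SS n s. \<Sum>m\<le>k. \<Sum>j<n. of_nat (k choose m) * of_nat p ^ (k-m) * (sig a I ^ m * a j ^ (k-m)))"
    by (rule sum.cong[OF refl], rule sum.swap)
  also have "\<dots> = (\<Sum>m\<le>k. \<Sum>I\<in>SS n s. \<Sum>j<n. of_nat (k choose m) * of_nat p ^ (k-m) * (sig a I ^ m * a j ^ (k-m)))"
    by (rule sum.swap[of "\<lambda>I m. \<Sum>j<n. of_nat (k choose m) * of_nat p ^ (k-m) * (sig a I ^ m * a j ^ (k-m))" "{..k}" "SS n s"])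
  also have "\<dots> = (\<Sum>m\<le>k. of_nat (k choose m) * of_nat p ^ (k-m) * ((\<Sum>I\<in>SS n s. sig a I ^ m) * (\<Sum>j<n. a j ^ (k-m))))"
    by (subst sum_product, simp only: sum_distrib_left)
  finally show ?thesis by (simp add: TT_def PP_def mult.assoc)
qed


definition Fc :: "nat \<Rightarrow> nat \<Rightarrow> nat \<Rightarrow> complex" where
  "Fc n s k = (\<Sum>p=1..s. (-1)^(p-1) * of_nat p^(k-1) * of_nat (n choose (s-p)))"

lemma binom_step_c: "of_nat (Suc m) * (of_nat (n choose Suc m) :: complex) = (of_nat n - of_nat m) * of_nat (n choose m)"
proof (cases "m < n")
  case True
  have "Suc m * (n choose Suc m) = (n - m) * (n choose m)"
  proof -
    obtain n' where n: "n = Suc n'" using True by (cases n) auto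
    have "Suc m * (n choose Suc m) = n * (n' choose m)" using Suc_times_binomial[of m n'] n by simp
    also have "\<dots> = (n - m) * (n choose m)" using binomial_absorb_comp[of n m] n by simp
    finally show ?thesis .
  qed
  hence "of_nat (Suc m * (n choose Suc m)) = (of_nat ((n - m) * (n choose m)) :: complex)" by simp
  then show ?thesis using True by (simp add: of_nat_diff algebra_simps)
next
  case False
  then have z: "n choose Suc m = 0" by simp
  show ?thesis
  proof (cases "m = n")
    case True then show ?thesis by (simp only: z) simp
  next
    case False then have z2: "n choose m = 0" using \<open>\<not> m < n\<close> by simp
    then show ?thesis by (simp only: z z2) simp
  qed
qed

lemma L_lemma: "of_nat m * (of_nat (n choose m) :: complex) = of_nat n * (\<Sum>q=1..m. (-1)^(q-1) * of_nat (n choose (m-q)))"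
proof (induction m)
  case 0 then show ?case by simp
next
  case (Suc m)
  have "(\<Sum>q=1..Suc m. (-1)^(q-1) * (of_nat (n choose (Suc m-q)) :: complex))
      = of_nat (n choose m) + (\<Sum>q=Suc 1..Suc m. (-1)^(q-1) * of_nat (n choose (Suc m-q)))"
    by (subst sum.atLeast_Suc_atMost) auto
  also have "(\<Sum>q=Suc 1..Suc m. (-1)^(q-1) * (of_nat (n choose (Suc m-q)) :: complex))
      = (\<Sum>q=1..m. (-1)^q * of_nat (n choose (m-q)))"
    by (subst sum.shift_bounds_cl_Suc_ivl) simp
  also have "\<dots> = - (\<Sum>q=1..m. (-1)^(q-1) * of_nat (n choose (m-q)))"
    unfolding sum_negf[symmetric] by (rule sum.cong[OF refl]) (simp add: neg_pow)
  finally have e: "(\<Sum>q=1..Suc m. (-1)^(q-1) * (of_nat (n choose (Suc m-q)) :: complex))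
      = of_nat (n choose m) + - (\<Sum>q=1..m. (-1)^(q-1) * of_nat (n choose (m-q)))" .
  have "of_nat n * (\<Sum>q=1..Suc m. (-1)^(q-1) * (of_nat (n choose (Suc m-q)) :: complex))
     = of_nat n * of_nat (n choose m) - of_nat n * (\<Sum>q=1..m. (-1)^(q-1) * of_nat (n choose (m-q)))"
    unfolding e by (simp add: algebra_simps)
  also have "\<dots> = of_nat n * of_nat (n choose m) - of_nat m * of_nat (n choose m)"
    using Suc.IH by simp
  also have "\<dots> = of_nat (Suc m) * of_nat (n choose Suc m)"
    using binom_step_c[of m n] by (simp add: algebra_simps)
  finally show ?case by simp
qed

lemma tri_aux2: fixes s p :: nat shows "(\<Sum>q=1..s-p. G q) = (\<Sum>q=1..s. if p + q \<le> s then G q else (0::complex))"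
proof -
  have "{q\<in>{1..s}. p + q \<le> s} = {1..s-p}" by auto
  then show ?thesis using sum.inter_filter[of "{1..s}" G "\<lambda>q. p + q \<le> s"] by simp
qed

lemma tri_aux: fixes s q :: nat shows "(\<Sum>p=1..s-q. G p) = (\<Sum>p=1..s. if p + q \<le> s then G p else (0::complex))"
proof -
  have "{p\<in>{1..s}. p + q \<le> s} = {1..s-q}" by auto
  then show ?thesis using sum.inter_filter[of "{1..s}" G "\<lambda>p. p + q \<le> s"] by simp
qed

lemma tri_swap: fixes s :: nat shows "(\<Sum>q=1..s. \<Sum>p=1..s-q. G p q) = (\<Sum>p=1..s. \<Sum>q=1..s-p. (G p q :: complex))"
proof -
  have "(\<Sum>q=1..s. \<Sum>p=1..s-q. G p q) = (\<Sum>q=1..s. \<Sum>p=1..s. if p + q \<le> s then G p q else 0)"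
    by (rule sum.cong[OF refl], rule tri_aux)
  also have "\<dots> = (\<Sum>p=1..s. \<Sum>q=1..s. if p + q \<le> s then G p q else 0)"
    by (rule sum.swap)
  also have "\<dots> = (\<Sum>p=1..s. \<Sum>q=1..s-p. G p q)"
    by (rule sum.cong[OF refl], rule tri_aux2[symmetric])
  finally show ?thesis .
qed

lemma comb: assumes "k \<ge> 1"
  shows "(\<Sum>q=1..s. (-1)^(q-1) * (of_nat q^k * of_nat (n choose (s-q)) + of_nat n * Fc n (s-q) k))
         = of_nat s * Fc n s k"
proof -
  define c where "c p = ((-1)^(p-1) * of_nat p^(k-1) :: complex)" for p
  have A: "(\<Sum>q=1..s. (-1)^(q-1) * (of_nat q^k * (of_nat (n choose (s-q)) :: complex)))
     = (\<Sum>p=1..s. c p * of_nat p * of_nat (n choose (s-p)))"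
  proof (rule sum.cong[OF refl])
    fix q assume "q \<in> {1..s}"
    have "(of_nat q :: complex)^k = of_nat q ^(k-1) * of_nat q"
      using assms by (metis Suc_diff_le diff_Suc_1 power_Suc2)
    then show "(-1)^(q-1) * (of_nat q^k * (of_nat (n choose (s-q)) :: complex)) = c q * of_nat q * of_nat (n choose (s-q))"
      by (simp add: c_def)
  qed
  have sF: "of_nat s * Fc n s k = (\<Sum>p=1..s. c p * of_nat s * of_nat (n choose (s-p)))"
    by (simp add: Fc_def c_def sum_distrib_left algebra_simps)
  have D: "of_nat s * Fc n s k - (\<Sum>p=1..s. c p * of_nat p * of_nat (n choose (s-p)))
       = (\<Sum>p=1..s. c p * (of_nat n * (\<Sum>q=1..s-p. (-1)^(q-1) * of_nat (n choose (s-p-q)))))"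
    unfolding sF sum_subtractf[symmetric]
  proof (rule sum.cong[OF refl])
    fix p assume p: "p \<in> {1..s}"
    have "c p * of_nat s * of_nat (n choose (s - p)) - c p * of_nat p * of_nat (n choose (s - p))
        = c p * (of_nat (s - p) * of_nat (n choose (s - p)))"
      using p by (simp add: of_nat_diff algebra_simps)
    also have "\<dots> = c p * (of_nat n * (\<Sum>q=1..s-p. (-1)^(q-1) * of_nat (n choose (s-p-q))))"
      by (simp add: L_lemma)
    finally show "c p * of_nat s * of_nat (n choose (s - p)) - c p * of_nat p * of_nat (n choose (s - p))
        = c p * (of_nat n * (\<Sum>q=1..s-p. (-1)^(q-1) * of_nat (n choose (s-p-q))))" .
  qed
  have B: "(\<Sum>q=1..s. (-1)^(q-1) * (of_nat n * Fc n (s-q) k))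
     = (\<Sum>q=1..s. \<Sum>p=1..s-q. of_nat n * ((-1)^(q-1) * (c p * of_nat (n choose (s-q-p)))))"
    by (simp add: Fc_def c_def sum_distrib_left algebra_simps)
  also have "\<dots> = (\<Sum>p=1..s. \<Sum>q=1..s-p. of_nat n * ((-1)^(q-1) * (c p * of_nat (n choose (s-q-p)))))"
    by (rule tri_swap)
  also have "\<dots> = (\<Sum>p=1..s. c p * (of_nat n * (\<Sum>q=1..s-p. (-1)^(q-1) * of_nat (n choose (s-p-q)))))"
    by (simp add: sum_distrib_left algebra_simps)
  finally have B': "(\<Sum>q=1..s. (-1)^(q-1) * (of_nat n * Fc n (s-q) k)) = \<dots>" .
  show ?thesis
    unfolding distrib_left sum.distrib A B' D[symmetric] by simp
qed


lemma dR:
  assumes k: "k \<ge> 1"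
    and low: "\<forall>m<k. \<forall>s'. TT a n s' m = TT b n s' m"
    and hyp: "\<forall>j. 1 \<le> j \<and> j < k \<longrightarrow> PP a n j = PP b n j"
  shows "RR a n s q k - RR b n s q k = of_nat q^k * of_nat (n choose s) * (PP a n k - PP b n k)
           + of_nat n * (TT a n s k - TT b n s k)"
proof -
  define f where "f m = of_nat (k choose m) * of_nat q ^ (k-m) * (TT a n s m * PP a n (k-m) - TT b n s m * PP b n (k-m))" for m
  have "RR a n s q k - RR b n s q k = (\<Sum>m\<le>k. f m)"
    unfolding RR_expand f_def sum_subtractf[symmetric] by (simp add: algebra_simps)
  also have "{..k} = insert 0 (insert k {1..<k})" using k by auto
  also have "(\<Sum>m\<in>insert 0 (insert k {1..<k}). f m) = f 0 + (f k + (\<Sum>m\<in>{1..<k}. f m))"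
    using k by (simp add: sum.insert)
  also have "(\<Sum>m\<in>{1..<k}. f m) = 0"
  proof (rule sum.neutral, rule ballI)
    fix m assume m: "m \<in> {1..<k}"
    then have "TT a n s m = TT b n s m" using low by auto
    moreover have "PP a n (k-m) = PP b n (k-m)" using hyp m by auto
    ultimately show "f m = 0" by (simp add: f_def)
  qed
  finally show ?thesis using k by (simp add: f_def TT_0 PP_0 algebra_simps)
qed

lemma main_diff:
  "1 \<le> k \<Longrightarrow> \<forall>j. 1 \<le> j \<and> j < k \<longrightarrow> PP a n j = PP b n j \<Longrightarrow>
    TT a n s k - TT b n s k = Fc n s k * (PP a n k - PP b n k)"
proof (induction k arbitrary: s rule: less_induct)
  case (less k)
  note IHk = less.IH and k = less.prems(1) and hyp = less.prems(2)
  have low: "\<forall>m<k. \<forall>s'. TT a n s' m = TT b n s' m"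
  proof (intro allI impI)
    fix m s' assume m: "m < k"
    show "TT a n s' m = TT b n s' m"
    proof (cases "m = 0")
      case True then show ?thesis by (simp add: TT_0)
    next
      case False
      then have "TT a n s' m - TT b n s' m = Fc n s' m * (PP a n m - PP b n m)"
        using IHk[of m s'] m hyp by auto
      moreover have "PP a n m = PP b n m" using hyp m False by auto
      ultimately show ?thesis by simp
    qed
  qed
  show ?case
  proof (induction s rule: less_induct)
    case (less s)
    show ?case
    proof (cases "s = 0")
      case True then show ?thesis using k by (simp add: TT_s0 Fc_def)
    next
      case False
      have "of_nat s * (TT a n s k - TT b n s k) = WW a n s 0 k - WW b n s 0 k"
        by (simp add: WW_s0 algebra_simps)
      also have "\<dots> = (\<Sum>q=1..s. (-1)^(q-1) * (RR a n (s-q) q k - RR b n (s-q) q k))"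
        unfolding WW_unfold sum_subtractf[symmetric] by (simp add: algebra_simps)
      also have "\<dots> = (\<Sum>q=1..s. (-1)^(q-1) * (of_nat q^k * of_nat (n choose (s-q)) + of_nat n * Fc n (s-q) k)) * (PP a n k - PP b n k)"
        unfolding sum_distrib_right
      proof (rule sum.cong[OF refl])
        fix q assume q: "q \<in> {1..s}"
        have "TT a n (s-q) k - TT b n (s-q) k = Fc n (s-q) k * (PP a n k - PP b n k)"
          using less.IH[of "s-q"] q by auto
        then have e: "RR a n (s-q) q k - RR b n (s-q) q k = of_nat q^k * of_nat (n choose (s-q)) * (PP a n k - PP b n k)
           + of_nat n * (Fc n (s-q) k * (PP a n k - PP b n k))"
          using dR[OF k low hyp, of "s-q" q] by simp
        show "(-1)^(q-1) * (RR a n (s-q) q k - RR b n (s-q) q k) =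
           (-1)^(q-1) * (of_nat q^k * of_nat (n choose (s-q)) + of_nat n * Fc n (s-q) k) * (PP a n k - PP b n k)"
          unfolding e by (simp add: algebra_simps)
      qed
      also have "\<dots> = of_nat s * (Fc n s k * (PP a n k - PP b n k))"
        using comb[OF k, of n s] by simp
      finally show ?thesis using False by simp
    qed
  qed
qed




lemma tele: "(\<Sum>q=1..Suc t. (-1)^(q-1) * a^q * (E (Suc t - q) + (if q = Suc t then 0 else a * E (t-q))))
   = a * (E t :: complex)"
proof -
  define h where "h q = (-1)^(q-1) * a^q * E (Suc t - q)" for q
  have s1: "(\<Sum>q=1..Suc t. (-1)^(q-1) * a^q * (E (Suc t - q) + (if q = Suc t then 0 else a * E (t-q))))
     = (\<Sum>q=1..Suc t. h q) + (\<Sum>q=1..Suc t. if q = Suc t then 0 else (-1)^(q-1) * a^(Suc q) * E (t-q))"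
    unfolding sum.distrib[symmetric] h_def by (rule sum.cong[OF refl]) (auto simp: algebra_simps)
  have s2: "(\<Sum>q=1..Suc t. if q = Suc t then 0 else (-1)^(q-1) * a^(Suc q) * E (t-q))
      = (\<Sum>q=1..t. (-1)^(q-1) * a^(Suc q) * E (t-q))"
    by (simp add: sum.cl_ivl_Suc)
  also have "\<dots> = (\<Sum>q=1..t. - h (Suc q))"
    by (rule sum.cong[OF refl]) (auto simp: h_def neg_pow)
  also have "\<dots> = - (\<Sum>q=Suc 1..Suc t. h q)"
    by (simp only: sum_negf sum.shift_bounds_cl_Suc_ivl)
  finally have s2': "(\<Sum>q=1..Suc t. if q = Suc t then 0 else (-1)^(q-1) * a^(Suc q) * E (t-q))
      = - (\<Sum>q=Suc 1..Suc t. h q)" .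
  have s3: "(\<Sum>q=1..Suc t. h q) = h 1 + (\<Sum>q=Suc 1..Suc t. h q)"
    by (rule sum.atLeast_Suc_atMost) simp
  show ?thesis unfolding s1 s2' s3 by (simp add: h_def)
qed

definition QQ :: "complex multiset \<Rightarrow> complex poly" where
  "QQ A = prod_mset (image_mset (\<lambda>x. [:1, x:]) A)"

definition ps :: "complex multiset \<Rightarrow> nat \<Rightarrow> complex" where
  "ps A q = sum_mset (image_mset (\<lambda>x. x^q) A)"

lemma coeff_lin: fixes p :: "complex poly" shows "coeff ([:1, a:] * p) j = coeff p j + (if j = 0 then 0 else a * coeff p (j-1))"
  by (cases j) (simp_all add: mult_pCons_left coeff_pCons)

lemma QQ_add: "QQ (add_mset a A) = [:1, a:] * QQ A" by (simp add: QQ_def)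

lemma newton: "of_nat s * coeff (QQ A) s = (\<Sum>q=1..s. (-1)^(q-1) * coeff (QQ A) (s-q) * ps A q)"
proof (induction A arbitrary: s)
  case empty
  show ?case
  proof (cases s)
    case 0 then show ?thesis by simp
  next
    case (Suc t)
    then show ?thesis by (simp add: QQ_def ps_def)
  qed
next
  case (add a A)
  define E where "E j = coeff (QQ A) j" for j
  show ?case
  proof (cases s)
    case 0 then show ?thesis by simp
  next
    case (Suc t)
    have F: "coeff (QQ (add_mset a A)) j = E j + (if j = 0 then 0 else a * E (j-1))" for j
      by (simp only: QQ_add coeff_lin E_def)
    have Fq: "q \<in> {1..Suc t} \<Longrightarrow> coeff (QQ (add_mset a A)) (Suc t - q) = E (Suc t - q) + (if q = Suc t then 0 else a * E (t - q))" for q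
      by (simp add: F Suc_diff_le)
    have ps_add: "ps (add_mset a A) q = ps A q + a^q" for q by (simp add: ps_def)
    have "(\<Sum>q=1..Suc t. (-1)^(q-1) * coeff (QQ (add_mset a A)) (Suc t-q) * ps (add_mset a A) q)
       = (\<Sum>q=1..Suc t. (-1)^(q-1) * E (Suc t - q) * ps A q)
       + (\<Sum>q=1..Suc t. if q = Suc t then 0 else a * ((-1)^(q-1) * E (t - q) * ps A q))
       + (\<Sum>q=1..Suc t. (-1)^(q-1) * a^q * (E (Suc t - q) + (if q = Suc t then 0 else a * E (t-q))))"
      unfolding sum.distrib[symmetric] by (rule sum.cong[OF refl]) (simp add: Fq ps_add algebra_simps)
    also have "(\<Sum>q=1..Suc t. if q = Suc t then 0 else a * ((-1)^(q-1) * E (t - q) * ps A q))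
        = a * (\<Sum>q=1..t. (-1)^(q-1) * E (t - q) * ps A q)"
      by (simp add: sum.cl_ivl_Suc sum_distrib_left)
    also have "(\<Sum>q=1..t. (-1)^(q-1) * E (t - q) * ps A q) = of_nat t * E t"
      using add.IH[of t] by (simp add: E_def)
    also have "(\<Sum>q=1..Suc t. (-1)^(q-1) * E (Suc t - q) * ps A q) = of_nat (Suc t) * E (Suc t)"
      using add.IH[of "Suc t"] by (simp add: E_def)
    also note tele
    finally show ?thesis using Suc by (simp add: F algebra_simps)
  qed
qed


lemma QQ_empty: "QQ {#} = 1" by (simp add: QQ_def)

lemma coeff_QQ_0: "coeff (QQ A) 0 = 1"
  by (induction A) (simp_all add: QQ_add coeff_lin QQ_empty)

lemma degree_QQ: "degree (QQ A) \<le> size A"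
proof (induction A)
  case empty then show ?case by (simp add: QQ_def)
next
  case (add a A)
  have "degree ([:1, a:] * QQ A) \<le> degree [:1,a:] + degree (QQ A)" by (rule degree_mult_le)
  also have "\<dots> \<le> 1 + size A" using add.IH by (simp add: degree_pCons_eq_if)
  finally show ?case by (simp add: QQ_add)
qed

lemma QQ_filter: "QQ A = QQ (filter_mset (\<lambda>x. x \<noteq> 0) A)"
  by (induction A) (simp_all add: QQ_add one_pCons QQ_empty)

lemma poly_QQ: "poly (QQ A) z = prod_mset (image_mset (\<lambda>x. 1 + x * z) A)"
  by (induction A) (simp_all add: QQ_add QQ_empty algebra_simps)

lemma QQ_root: assumes "b \<in># B" "b \<noteq> 0" shows "poly (QQ B) (-1/b) = 0"
proof -
  have "1 + b * (-1/b) = 0" using assms(2) by simp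
  moreover have "(\<lambda>x. 1 + x * (-1/b)) b \<in># image_mset (\<lambda>x. 1 + x * (-1/b)) B"
    unfolding set_image_mset by (rule imageI[OF assms(1)])
  ultimately have "0 \<in># image_mset (\<lambda>x. 1 + x * (-1/b)) B" by simp
  then show ?thesis unfolding poly_QQ by (simp only: prod_mset_zero_iff)
qed

lemma QQ_root2: assumes "poly (QQ B) z = 0" shows "\<exists>b\<in>#B. 1 + b * z = 0"
proof -
  have "0 \<in># image_mset (\<lambda>x. 1 + x * z) B" using assms unfolding poly_QQ by (simp only: prod_mset_zero_iff)
  then obtain b where "b \<in># B" "0 = 1 + b * z" unfolding set_image_mset by (rule imageE)
  then show ?thesis by auto
qed

lemma QQ_inj_nz:
  "(\<forall>x\<in>#A. x \<noteq> 0) \<Longrightarrow> (\<forall>x\<in>#B. x \<noteq> 0) \<Longrightarrow> QQ A = QQ B \<Longrightarrow> A = B"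
proof (induction A arbitrary: B)
  case empty
  show ?case
  proof (rule ccontr)
    assume "{#} \<noteq> B"
    then have "B \<noteq> {#}" by simp
    then obtain b where b: "b \<in># B" by (rule multiset_nonemptyE)
    then have b0: "b \<noteq> 0" using empty by auto
    have "poly (QQ B) (-1/b) = 0" by (rule QQ_root[OF b b0])
    moreover have "poly (QQ {#}) (-1/b) = 1" by (simp add: QQ_empty)
    ultimately show False using empty by simp
  qed
next
  case (add a A)
  have a0: "a \<noteq> 0" using add.prems by auto
  have "poly (QQ (add_mset a A)) (-1/a) = 0" by (rule QQ_root) (use a0 in auto)
  then have "poly (QQ B) (-1/a) = 0" using add.prems by simp
  then obtain b where b: "b \<in># B" "1 + b * (-1/a) = 0" using QQ_root2 by blast
  have "a * (1 + b * (-1/a)) = a - b"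
    using a0 by (simp add: field_simps)
  then have "b = a" using b(2) by simp
  then have "a \<in># B" using b(1) by simp
  then obtain B' where B: "B = add_mset a B'" by (rule mset_add)
  have "[:1, a:] * QQ A = [:1, a:] * QQ B'" using add.prems B by (simp only: QQ_add)
  moreover have ne: "[:1,a:] \<noteq> (0::complex poly)" by simp
  ultimately have "QQ A = QQ B'" using mult_left_cancel[OF ne] by blast
  moreover have "\<forall>x\<in>#A. x \<noteq> 0" using add.prems(1) by simp
  moreover have "\<forall>x\<in>#B'. x \<noteq> 0" using add.prems(2) B by simp
  ultimately have "A = B'" using add.IH[of B'] by blast
  then show ?case using B by simp
qed

lemma QQ_inj: assumes "QQ A = QQ B" "size A = size B" shows "A = B"
proof -
  let ?nz = "\<lambda>x::complex. x \<noteq> 0"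
  have nz: "filter_mset ?nz A = filter_mset ?nz B"
    by (rule QQ_inj_nz) (use assms QQ_filter in auto)
  have rA: "{#x \<in># A. \<not> x \<noteq> 0#} = replicate_mset (count A 0) 0"
    unfolding not_not by (rule filter_eq_replicate_mset)
  have A: "A = filter_mset ?nz A + replicate_mset (count A 0) 0"
    using multiset_partition[of A ?nz] unfolding rA .
  have rB: "{#x \<in># B. \<not> x \<noteq> 0#} = replicate_mset (count B 0) 0"
    unfolding not_not by (rule filter_eq_replicate_mset)
  have B: "B = filter_mset ?nz B + replicate_mset (count B 0) 0"
    using multiset_partition[of B ?nz] unfolding rB .
  have "size A = size (filter_mset ?nz A) + count A 0" by (subst A) simp
  moreover have "size B = size (filter_mset ?nz B) + count B 0" by (subst B) simp
  ultimately have "count A 0 = count B 0" using nz assms(2) by simp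
  then show ?thesis using A B nz by metis
qed

lemma ps_eq_QQ:
  assumes "size A = n" "size B = n" "\<forall>q. 1 \<le> q \<and> q \<le> n \<longrightarrow> ps A q = ps B q"
  shows "A = B"
proof -
  have le: "\<forall>s'\<le>s. coeff (QQ A) s' = coeff (QQ B) s'" if "s \<le> n" for s
    using that
  proof (induction s)
    case 0 then show ?case by (simp add: coeff_QQ_0)
  next
    case (Suc s)
    have IH: "\<forall>s'\<le>s. coeff (QQ A) s' = coeff (QQ B) s'" using Suc by simp
    have "of_nat (Suc s) * coeff (QQ A) (Suc s) = of_nat (Suc s) * coeff (QQ B) (Suc s)"
      unfolding newton
      by (rule sum.cong[OF refl]) (use IH assms(3) Suc.prems in auto)
    then have "coeff (QQ A) (Suc s) = coeff (QQ B) (Suc s)"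
      by (metis mult_cancel_left of_nat_eq_0_iff nat.distinct(1))
    then show ?case using IH le_Suc_eq by auto
  qed
  have "coeff (QQ A) s = coeff (QQ B) s" for s
  proof (cases "s \<le> n")
    case True then show ?thesis using le by auto
  next
    case False
    then have "degree (QQ A) < s" "degree (QQ B) < s" using degree_QQ[of A] degree_QQ[of B] assms by auto
    then show ?thesis by (simp add: coeff_eq_0)
  qed
  then have "QQ A = QQ B" by (simp add: poly_eq_iff)
  then show ?thesis using QQ_inj assms by simp
qed

lemma moser_Fc: "1 \<le> s \<Longrightarrow> complex_of_real (moser (int s) k (real n)) = Fc n s k"
  by (simp add: moser_def Fc_def binomial_gbinomial[symmetric])

lemma TT_subset_sums: "TT (\<lambda>i. xs ! i) (length xs) s k = sum_mset (image_mset (\<lambda>x. x^k) (subset_sums s xs))"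
proof -
  have "SS (length xs) s = {I. I \<subseteq> {0..<length xs} \<and> card I = s}"
    by (simp add: SS_def atLeast0LessThan)
  then show ?thesis
    unfolding TT_def subset_sums_def sig_def
    by (simp add: sum_unfold_sum_mset image_mset.compositionality o_def)
qed

lemma PP_ps: "PP (\<lambda>i. xs ! i) (length xs) k = ps (mset xs) k"
proof -
  have "sum_mset (image_mset (\<lambda>x. x^k) (mset xs)) = sum_list (map (\<lambda>x. x^k) xs)"
    by (simp only: mset_map[symmetric] sum_mset_sum_list)
  also have "\<dots> = (\<Sum>i = 0..<length xs. map (\<lambda>x. x^k) xs ! i)"
    by (simp only: sum_list_sum_nth length_map)
  also have "\<dots> = (\<Sum>i<length xs. xs ! i ^ k)"
    by (simp add: atLeast0LessThan)
  finally show ?thesis unfolding PP_def ps_def by simp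
qed

theorem mainTheorem5:
  fixes n s :: nat
  assumes "1 \<le> s" and "s < n"
    and "\<forall>k\<in>{1..n}. moser (int s) k (real n) \<noteq> 0"
  shows "\<forall>xs ys :: complex list. length xs = n \<longrightarrow> length ys = n \<longrightarrow>
           subset_sums s xs = subset_sums s ys \<longrightarrow> mset xs = mset ys"
proof (intro allI impI)
  fix xs ys :: "complex list"
  assume lx: "length xs = n" and ly: "length ys = n" and eq: "subset_sums s xs = subset_sums s ys"
  define a where "a = (\<lambda>i. xs ! i)"
  define b where "b = (\<lambda>i. ys ! i)"
  have TTeq: "TT a n s k = TT b n s k" for k
    using TT_subset_sums[of xs s k] TT_subset_sums[of ys s k] eq lx ly by (simp add: a_def b_def)
  have Fnz: "Fc n s k \<noteq> 0" if "k \<in> {1..n}" for k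
    using assms(3) that moser_Fc[OF assms(1), of k n] by (metis of_real_eq_0_iff)
  have PPeq: "\<forall>k. 1 \<le> k \<and> k \<le> n \<longrightarrow> PP a n k = PP b n k"
  proof (intro allI)
    fix k show "1 \<le> k \<and> k \<le> n \<longrightarrow> PP a n k = PP b n k"
    proof (induction k rule: less_induct)
      case (less k)
      show ?case
      proof
        assume k: "1 \<le> k \<and> k \<le> n"
        have "\<forall>j. 1 \<le> j \<and> j < k \<longrightarrow> PP a n j = PP b n j" using less.IH k by auto
        then have "TT a n s k - TT b n s k = Fc n s k * (PP a n k - PP b n k)"
          using main_diff k by blast
        then have "Fc n s k * (PP a n k - PP b n k) = 0" using TTeq by simp
        then show "PP a n k = PP b n k" using Fnz k by simp
      qed
    qed
  qed
  show "mset xs = mset ys"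
  proof (rule ps_eq_QQ[of _ n])
    show "size (mset xs) = n" "size (mset ys) = n" using lx ly by auto
    show "\<forall>q. 1 \<le> q \<and> q \<le> n \<longrightarrow> ps (mset xs) q = ps (mset ys) q"
      using PPeq PP_ps[of xs] PP_ps[of ys] lx ly by (simp add: a_def b_def)
  qed
qed

end
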